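(* Let $G$ be a finite group, $H\leq G$ a subgroup of index $n$, and $T=\{t_1,\ldots,t_n\}$ a right transversal to $H$ in $G$ with $t_1=1$. For $g\in G$ write $g=\mathsf{H}(g)\mathsf{T}(g)$ with $\mathsf{H}(g)\in H$ and $\mathsf{T}(g)\in T$ (uniquely determined). Let $\chi$ be a linear character of $H$, let $\chi^+$ be its extension to $G$ by $0$ outside $H$, and let $\rho$ be the representation $\rho(g)=[\chi^+(t_igt_k^{-1})]_{i,k}$ of $G$. Put $\chi_{\mathsf{H}}(g)=\chi(\mathsf{H}(g))$ for $g\in G$. Let $M$ be an $n\times n$ complex matrix whose rows and columns are labelled by $T$ (in the order $t_1,\ldots,t_n$), and write $m(s,t)$ for the entry in row $s$ and column $t$. Then $M$ lies in the centraliser algebra $\mathrm{C}(\rho)=\{X\in M_n(\mathbb{C}) : X\rho(g)=\rho(g)X \text{ for all } g\in G\}$ if and only if for all $g\in G$ and $t\in T$, \[ m(\mathsf{T}(g),\mathsf{T}(tg)) = m(1,t)\,\chi_{\mathsf{H}}(g)^{-1}\,\chi_{\mathsf{H}}(tg).\]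
   Context: A right transversal $T$ to $H$ in $G$ is a set such that every $g\in G$ factorises uniquely as $g=ht$ with $h\in H$, $t\in T$. Here $1=t_1\in T$ is the identity element, labelling the coset $H$. *)

theory Defs
  imports Complex_Main "HOL-Algebra.Algebra"
begin

definition right_transversal :: "('a, 'b) monoid_scheme \<Rightarrow> 'a set \<Rightarrow> 'a set \<Rightarrow> bool" where
  "right_transversal G H T \<longleftrightarrow> T \<subseteq> carrier G \<and>
     (\<forall>g\<in>carrier G. \<exists>!p. fst p \<in> H \<and> snd p \<in> T \<and> g = fst p \<otimes>\<^bsub>G\<^esub> snd p)"

definition Hpart :: "('a, 'b) monoid_scheme \<Rightarrow> 'a set \<Rightarrow> 'a set \<Rightarrow> 'a \<Rightarrow> 'a" where
  "Hpart G H T g = fst (THE p. fst p \<in> H \<and> snd p \<in> T \<and> g = fst p \<otimes>\<^bsub>G\<^esub> snd p)"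

definition Tpart :: "('a, 'b) monoid_scheme \<Rightarrow> 'a set \<Rightarrow> 'a set \<Rightarrow> 'a \<Rightarrow> 'a" where
  "Tpart G H T g = snd (THE p. fst p \<in> H \<and> snd p \<in> T \<and> g = fst p \<otimes>\<^bsub>G\<^esub> snd p)"

definition linear_character :: "('a, 'b) monoid_scheme \<Rightarrow> 'a set \<Rightarrow> ('a \<Rightarrow> complex) \<Rightarrow> bool" where
  "linear_character G H \<chi> \<longleftrightarrow> (\<forall>x\<in>H. \<chi> x \<noteq> 0) \<and>
     (\<forall>x\<in>H. \<forall>y\<in>H. \<chi> (x \<otimes>\<^bsub>G\<^esub> y) = \<chi> x * \<chi> y)"

definition chi_plus :: "'a set \<Rightarrow> ('a \<Rightarrow> complex) \<Rightarrow> 'a \<Rightarrow> complex" where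
  "chi_plus H \<chi> x = (if x \<in> H then \<chi> x else 0)"

text \<open>The induced representation, as a matrix with rows and columns labelled by T.\<close>
definition rho :: "('a, 'b) monoid_scheme \<Rightarrow> 'a set \<Rightarrow> ('a \<Rightarrow> complex) \<Rightarrow> 'a \<Rightarrow> 'a \<Rightarrow> 'a \<Rightarrow> complex" where
  "rho G H \<chi> g s t = chi_plus H \<chi> (s \<otimes>\<^bsub>G\<^esub> g \<otimes>\<^bsub>G\<^esub> m_inv G t)"

definition tmat_mult :: "'a set \<Rightarrow> ('a \<Rightarrow> 'a \<Rightarrow> complex) \<Rightarrow> ('a \<Rightarrow> 'a \<Rightarrow> complex) \<Rightarrow> 'a \<Rightarrow> 'a \<Rightarrow> complex" where
  "tmat_mult T A B i j = sum (\<lambda>k. A i k * B k j) T"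

definition in_centraliser :: "('a, 'b) monoid_scheme \<Rightarrow> 'a set \<Rightarrow> 'a set \<Rightarrow> ('a \<Rightarrow> complex) \<Rightarrow> ('a \<Rightarrow> 'a \<Rightarrow> complex) \<Rightarrow> bool" where
  "in_centraliser G H T \<chi> M \<longleftrightarrow> (\<forall>g\<in>carrier G. \<forall>s\<in>T. \<forall>u\<in>T.
     tmat_mult T M (rho G H \<chi> g) s u = tmat_mult T (rho G H \<chi> g) M s u)"

end

theory Submission
  imports Defs
begin

locale rtctx = group G for G (structure) +
  fixes H T :: "'a set" and \<chi> :: "'a \<Rightarrow> complex"
  assumes fin: "finite (carrier G)" and sg: "subgroup H G"
    and rt: "right_transversal G H T" and oneT: "\<one> \<in> T"
    and lc: "linear_character G H \<chi>"
begin

abbreviation "hp \<equiv> Hpart G H T"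
abbreviation "tp \<equiv> Tpart G H T"

lemma HG: "H \<subseteq> carrier G" using sg by (simp add: subgroup.subset)
lemma TG: "T \<subseteq> carrier G" using rt by (simp add: right_transversal_def)
lemma finT: "finite T" using TG fin finite_subset by blast

lemma decomp:
  assumes "g \<in> carrier G"
  shows "hp g \<in> H \<and> tp g \<in> T \<and> g = hp g \<otimes> tp g"
proof -
  let ?P = "\<lambda>p. fst p \<in> H \<and> snd p \<in> T \<and> g = fst p \<otimes> snd p"
  have "\<exists>!p. ?P p" using rt assms by (simp add: right_transversal_def)
  hence "?P (THE p. ?P p)" by (rule theI')
  thus ?thesis by (simp add: Hpart_def Tpart_def)
qed

lemma uniq:
  assumes "h \<in> H" "t \<in> T" "g = h \<otimes> t"
  shows "hp g = h" "tp g = t"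
proof -
  let ?P = "\<lambda>p. fst p \<in> H \<and> snd p \<in> T \<and> g = fst p \<otimes> snd p"
  have gc: "g \<in> carrier G" using assms HG TG by auto
  have "\<exists>!p. ?P p" using rt gc by (simp add: right_transversal_def)
  moreover have "?P (h,t)" using assms by simp
  ultimately have "(THE p. ?P p) = (h,t)" by (rule the1_equality)
  thus "hp g = h" "tp g = t" by (simp_all add: Hpart_def Tpart_def)
qed

lemma D2: assumes y: "y \<in> carrier G" shows "y \<otimes> inv (tp y) = hp y"
proof -
  have d: "hp y \<in> H" "tp y \<in> T" "y = hp y \<otimes> tp y" using decomp[OF y] by auto
  have c: "hp y \<in> carrier G" "tp y \<in> carrier G" using d HG TG by auto
  have "hp y = y \<otimes> inv (tp y)" using inv_solve_right[OF c(1) y c(2)] d(3) by simp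
  thus ?thesis by simp
qed

lemma L: assumes "x \<in> carrier G" "t \<in> T"
  shows "x \<otimes> inv t \<in> H \<longleftrightarrow> t = tp x"
proof
  assume "x \<otimes> inv t \<in> H"
  moreover have "x = (x \<otimes> inv t) \<otimes> t" using assms TG
    by (simp add: m_assoc subsetD)
  ultimately show "t = tp x" using uniq(2)[of "x \<otimes> inv t" t x] assms(2) by simp
next
  assume "t = tp x" thus "x \<otimes> inv t \<in> H" using D2 decomp assms by simp
qed

lemma Tt: "t \<in> T \<Longrightarrow> tp t = t \<and> hp t = \<one>"
  using uniq[of \<one> t t] sg TG by (auto simp: subgroup.one_closed subsetD)

lemma HT1: assumes "h \<in> H" "x \<in> carrier G"
  shows "tp (h \<otimes> x) = tp x" "hp (h \<otimes> x) = h \<otimes> hp x"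
proof -
  have d: "hp x \<in> H" "tp x \<in> T" "x = hp x \<otimes> tp x" using decomp assms by auto
  have hc: "h \<in> carrier G" "hp x \<in> carrier G" "tp x \<in> carrier G" using d assms HG TG by auto
  have e: "h \<otimes> x = (h \<otimes> hp x) \<otimes> tp x" using hc d(3) by (simp add: m_assoc)
  have m: "h \<otimes> hp x \<in> H" using d assms sg by (simp add: subgroup.m_closed)
  show "tp (h \<otimes> x) = tp x" "hp (h \<otimes> x) = h \<otimes> hp x"
    using uniq[OF m d(2) e] by auto
qed

lemma chi_nz: "h \<in> H \<Longrightarrow> \<chi> h \<noteq> 0" using lc by (simp add: linear_character_def)
lemma chi_mult: "h \<in> H \<Longrightarrow> k \<in> H \<Longrightarrow> \<chi> (h \<otimes> k) = \<chi> h * \<chi> k"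
  using lc by (simp add: linear_character_def)
lemma chi_one: "\<chi> \<one> = 1"
proof -
  have o: "\<one> \<in> H" using sg by (simp add: subgroup.one_closed)
  have "\<chi> \<one> = \<chi> \<one> * \<chi> \<one>" using chi_mult[OF o o] by simp
  thus ?thesis using chi_nz[OF o] by simp
qed
lemma chi_inv: assumes "h \<in> H" shows "\<chi> (inv h) = inverse (\<chi> h)"
proof -
  have i: "inv h \<in> H" using sg assms by (simp add: subgroup.m_inv_closed)
  have "\<chi> (inv h) * \<chi> h = 1" using chi_mult[OF i assms] chi_one assms HG
    using HG assms by (simp add: subsetD)
  thus ?thesis by (metis inverse_unique mult.commute)
qed

lemma sum_single: "k \<in> T \<Longrightarrow> (\<And>j. j \<in> T \<Longrightarrow> j \<noteq> k \<Longrightarrow> f j = 0) \<Longrightarrow> sum f T = f k"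
proof -
  assume k: "k \<in> T" and z: "\<And>j. j \<in> T \<Longrightarrow> j \<noteq> k \<Longrightarrow> f j = 0"
  have "sum f T = sum (\<lambda>j. if j = k then f k else 0) T" by (rule sum.cong) (auto simp: z)
  also have "\<dots> = f k" using k finT by simp
  finally show ?thesis .
qed

lemma MR: assumes g: "g \<in> carrier G" and s: "s \<in> T" and u: "u \<in> T"
  shows "tmat_mult T M (rho G H \<chi> g) s u = M s (tp (u \<otimes> inv g)) * \<chi> (inv (hp (u \<otimes> inv g)))"
proof -
  let ?y = "u \<otimes> inv g"
  have uc: "u \<in> carrier G" using u TG by auto
  have yc: "?y \<in> carrier G" using uc g by simp
  have k0: "tp ?y \<in> T" using decomp yc by simp
  have key: "k \<otimes> g \<otimes> inv u = inv (?y \<otimes> inv k)" if "k \<in> T" for k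
    using that TG g uc by (simp add: inv_mult_group m_assoc subsetD)
  have mem: "k \<otimes> g \<otimes> inv u \<in> H \<longleftrightarrow> k = tp ?y" if "k \<in> T" for k
  proof -
    have kc: "k \<in> carrier G" using that TG by auto
    have zc: "?y \<otimes> inv k \<in> carrier G" using kc yc by simp
    have "k \<otimes> g \<otimes> inv u \<in> H \<longleftrightarrow> inv (?y \<otimes> inv k) \<in> H" using key[OF that] by simp
    also have "\<dots> \<longleftrightarrow> ?y \<otimes> inv k \<in> H"
    proof
      assume "inv (?y \<otimes> inv k) \<in> H"
      hence "inv (inv (?y \<otimes> inv k)) \<in> H" using sg by (rule subgroup.m_inv_closed[rotated])
      thus "?y \<otimes> inv k \<in> H" using inv_inv[OF zc] by simp
    next
      assume "?y \<otimes> inv k \<in> H"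
      thus "inv (?y \<otimes> inv k) \<in> H" using sg by (rule subgroup.m_inv_closed[rotated])
    qed
    finally have "k \<otimes> g \<otimes> inv u \<in> H \<longleftrightarrow> ?y \<otimes> inv k \<in> H" .
    thus ?thesis using L[OF yc that] by simp
  qed
  have "tmat_mult T M (rho G H \<chi> g) s u = M s (tp ?y) * chi_plus H \<chi> (tp ?y \<otimes> g \<otimes> inv u)"
    unfolding tmat_mult_def rho_def
    by (rule sum_single[OF k0]) (simp add: chi_plus_def mem)
  also have "tp ?y \<otimes> g \<otimes> inv u = inv (hp ?y)" using key[OF k0] D2[OF yc] by simp
  also have "chi_plus H \<chi> (inv (hp ?y)) = \<chi> (inv (hp ?y))"
    using decomp[OF yc] sg by (simp add: chi_plus_def subgroup.m_inv_closed)
  finally show ?thesis .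
qed

lemma RM: assumes g: "g \<in> carrier G" and s: "s \<in> T" and u: "u \<in> T"
  shows "tmat_mult T (rho G H \<chi> g) M s u = \<chi> (hp (s \<otimes> g)) * M (tp (s \<otimes> g)) u"
proof -
  let ?y = "s \<otimes> g"
  have yc: "?y \<in> carrier G" using s TG g by auto
  have k0: "tp ?y \<in> T" using decomp yc by simp
  have "tmat_mult T (rho G H \<chi> g) M s u = chi_plus H \<chi> (?y \<otimes> inv (tp ?y)) * M (tp ?y) u"
    unfolding tmat_mult_def rho_def
    by (rule sum_single[OF k0]) (simp add: chi_plus_def L[OF yc])
  also have "chi_plus H \<chi> (?y \<otimes> inv (tp ?y)) = \<chi> (hp ?y)"
    using D2[OF yc] decomp[OF yc] by (simp add: chi_plus_def)
  finally show ?thesis .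
qed

lemma cent_iff: "in_centraliser G H T \<chi> M \<longleftrightarrow> (\<forall>g\<in>carrier G. \<forall>s\<in>T. \<forall>u\<in>T.
   M s (tp (u \<otimes> inv g)) * \<chi> (inv (hp (u \<otimes> inv g))) = \<chi> (hp (s \<otimes> g)) * M (tp (s \<otimes> g)) u)"
  unfolding in_centraliser_def using MR RM by simp

lemma C_to_P:
  assumes C: "\<forall>g\<in>carrier G. \<forall>s\<in>T. \<forall>u\<in>T.
   M s (tp (u \<otimes> inv g)) * \<chi> (inv (hp (u \<otimes> inv g))) = \<chi> (hp (s \<otimes> g)) * M (tp (s \<otimes> g)) u"
    and g: "g \<in> carrier G" and t: "t \<in> T"
  shows "M (tp g) (tp (t \<otimes> g)) = M \<one> t * inverse (\<chi> (hp g)) * \<chi> (hp (t \<otimes> g))"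
proof -
  let ?x = "t \<otimes> g"
  have tc: "t \<in> carrier G" using t TG by auto
  have xc: "?x \<in> carrier G" using tc g by simp
  have dx: "hp ?x \<in> H" "tp ?x \<in> T" "?x = hp ?x \<otimes> tp ?x" using decomp[OF xc] by auto
  have hxc: "hp ?x \<in> carrier G" using dx HG by auto
  have ux: "tp ?x \<otimes> inv g = inv (hp ?x) \<otimes> t"
  proof -
    have txc: "tp ?x \<in> carrier G" using dx TG by auto
    have "tp ?x = inv (hp ?x) \<otimes> ?x" using inv_solve_left[OF txc hxc xc] dx(3) by simp
    thus ?thesis using hxc tc g by (simp add: m_assoc)
  qed
  have ih: "inv (hp ?x) \<in> H" using dx sg by (simp add: subgroup.m_inv_closed)
  have e1: "tp (tp ?x \<otimes> inv g) = t" "hp (tp ?x \<otimes> inv g) = inv (hp ?x)"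
    using uniq[OF ih t ux] by auto
  have "M \<one> t * \<chi> (hp ?x) = \<chi> (hp g) * M (tp g) (tp ?x)"
    using C[rule_format, OF g oneT dx(2)] e1 hxc g by simp
  moreover have "\<chi> (hp g) \<noteq> 0" using decomp[OF g] chi_nz by auto
  ultimately show ?thesis by (simp add: field_simps)
qed

lemma P_gen:
  assumes P: "\<forall>g\<in>carrier G. \<forall>t\<in>T.
       M (tp g) (tp (t \<otimes> g)) = M \<one> t * inverse (\<chi> (hp g)) * \<chi> (hp (t \<otimes> g))"
    and a: "a \<in> carrier G" and x: "x \<in> carrier G"
  shows "M (tp a) (tp x) * \<chi> (hp a) * \<chi> (hp (x \<otimes> inv a)) = M \<one> (tp (x \<otimes> inv a)) * \<chi> (hp x)"
proof -
  let ?y = "x \<otimes> inv a"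
  have yc: "?y \<in> carrier G" using a x by simp
  define k where "k = hp ?y"
  define t where "t = tp ?y"
  have kt: "k \<in> H" "t \<in> T" "?y = k \<otimes> t" using decomp[OF yc] k_def t_def by auto
  have kc: "k \<in> carrier G" and tc: "t \<in> carrier G" using kt HG TG by auto
  have tac: "t \<otimes> a \<in> carrier G" using tc a by simp
  have xe: "x = k \<otimes> (t \<otimes> a)"
  proof -
    have "x = ?y \<otimes> a" using x a by (simp add: m_assoc)
    thus ?thesis using kt kc tc a by (simp add: m_assoc)
  qed
  have tx: "tp x = tp (t \<otimes> a)" and hx: "hp x = k \<otimes> hp (t \<otimes> a)"
    using HT1[OF kt(1) tac] xe by auto
  have hta: "hp (t \<otimes> a) \<in> H" using decomp[OF tac] by simp
  have cx: "\<chi> (hp x) = \<chi> k * \<chi> (hp (t \<otimes> a))" using hx chi_mult[OF kt(1) hta] by simp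
  have Pa: "M (tp a) (tp (t \<otimes> a)) = M \<one> t * inverse (\<chi> (hp a)) * \<chi> (hp (t \<otimes> a))"
    using P a kt(2) by blast
  have nz: "\<chi> (hp a) \<noteq> 0" using decomp[OF a] chi_nz by auto
  show ?thesis using Pa nz cx tx unfolding k_def[symmetric] t_def[symmetric]
    by (simp add: field_simps)
qed

lemma P_to_C:
  assumes P: "\<forall>g\<in>carrier G. \<forall>t\<in>T.
       M (tp g) (tp (t \<otimes> g)) = M \<one> t * inverse (\<chi> (hp g)) * \<chi> (hp (t \<otimes> g))"
    and g: "g \<in> carrier G" and s: "s \<in> T" and u: "u \<in> T"
  shows "M s (tp (u \<otimes> inv g)) * \<chi> (inv (hp (u \<otimes> inv g))) = \<chi> (hp (s \<otimes> g)) * M (tp (s \<otimes> g)) u"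
proof -
  have sc: "s \<in> carrier G" and uc: "u \<in> carrier G" using s u TG by auto
  let ?y = "u \<otimes> inv g"
  let ?z = "u \<otimes> inv (s \<otimes> g)"
  have yc: "?y \<in> carrier G" using uc g by simp
  have sgc: "s \<otimes> g \<in> carrier G" using sc g by simp
  have yz: "?y \<otimes> inv s = ?z" using uc g sc by (simp add: inv_mult_group m_assoc)
  have e1: "M s (tp ?y) * \<chi> (hp ?z) = M \<one> (tp ?z) * \<chi> (hp ?y)"
    using P_gen[OF P sc yc] Tt[OF s] Tt[OF u] chi_one yz by simp
  have e2: "M (tp (s \<otimes> g)) u * \<chi> (hp (s \<otimes> g)) * \<chi> (hp ?z) = M \<one> (tp ?z)"
    using P_gen[OF P sgc uc] Tt[OF u] chi_one by simp
  have zc: "?z \<in> carrier G" using uc sgc by simp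
  have nz1: "\<chi> (hp ?z) \<noteq> 0" using decomp[OF zc] chi_nz by auto
  have hy: "hp ?y \<in> H" using decomp[OF yc] by simp
  have nz2: "\<chi> (hp ?y) \<noteq> 0" using hy chi_nz by auto
  have ci: "\<chi> (inv (hp ?y)) = inverse (\<chi> (hp ?y))" using chi_inv[OF hy] .
  have "M s (tp ?y) = M \<one> (tp ?z) * \<chi> (hp ?y) / \<chi> (hp ?z)" using e1 nz1
    by (simp add: field_simps)
  moreover have "\<chi> (hp (s \<otimes> g)) * M (tp (s \<otimes> g)) u = M \<one> (tp ?z) / \<chi> (hp ?z)"
    using e2 nz1 by (simp add: field_simps)
  ultimately show ?thesis using ci nz2 by simp
qed

lemma main: "in_centraliser G H T \<chi> M \<longleftrightarrow>
    (\<forall>g\<in>carrier G. \<forall>t\<in>T.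
       M (tp g) (tp (t \<otimes> g)) = M \<one> t * inverse (\<chi> (hp g)) * \<chi> (hp (t \<otimes> g)))"
  unfolding cent_iff using C_to_P P_to_C by blast

end

theorem proposition3p2:
  fixes G (structure) and H T :: "'a set" and \<chi> :: "'a \<Rightarrow> complex" and M :: "'a \<Rightarrow> 'a \<Rightarrow> complex"
  assumes "group G" and "finite (carrier G)" and "subgroup H G"
    and "right_transversal G H T" and "\<one> \<in> T"
    and "linear_character G H \<chi>"
  shows "in_centraliser G H T \<chi> M \<longleftrightarrow>
    (\<forall>g\<in>carrier G. \<forall>t\<in>T.
       M (Tpart G H T g) (Tpart G H T (t \<otimes> g)) =
       M \<one> t * inverse (\<chi> (Hpart G H T g)) * \<chi> (Hpart G H T (t \<otimes> g)))"
proof -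
  interpret rtctx G H T \<chi>
    using assms by (simp add: rtctx_def rtctx_axioms_def)
  show ?thesis by (rule main)
qed

end
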